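(* Let $\Omega\subset\mathbb{R}^N$ be a domain and $p>\max\{1,\frac{2N}{N+2}\}$. Then the Banach space $\mathbb{X}_p(\Omega)$ is uniformly convex.
   Context: $\mathbb{L}^r(\Omega)=\mathrm{L}^r(\Omega)\times\mathrm{L}^r(\Omega)$ (real), $\mathbb{X}_p(\Omega):=\{U\in\mathbb{L}^2(\Omega):\nabla U\in(\mathbb{L}^p(\Omega))^N\}$ with norm $|U|_{\mathbb{X}_p}=[|U|_{\mathbb{L}^2}^p+|\nabla U|_{\mathbb{L}^p}^p]^{1/p}$ if $p\ge2$ and $|U|_{\mathbb{X}_p}=[|U|_{\mathbb{L}^2}^{p'}+|\nabla U|_{\mathbb{L}^p}^{p'}]^{1/p'}$ if $\max\{1,\frac{2N}{N+2}\}<p\le2$, where $\frac1p+\frac1{p'}=1$ and $|\nabla U|_{\mathbb{L}^p}$ is the $\mathrm{L}^p$ norm of the Euclidean length of $\nabla U\in\mathbb{R}^{2N}$. *)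

theory Defs
  imports "HOL-Analysis.Analysis"
begin

text \<open>Points of \<Omega> live in an N-dimensional Euclidean space 'a (N = DIM('a)).
  A vector field U : \<Omega> \<rightarrow> R^2 is a function 'a \<Rightarrow> real \<times> real; its gradient
  \<nabla>U \<in> R^(2N) is represented as a pair (\<nabla>U_1, \<nabla>U_2) :: 'a \<times> 'a, whose product
  norm is exactly the Euclidean length of \<nabla>U in R^(2N).\<close>

fun Ck :: "nat \<Rightarrow> ('a::euclidean_space \<Rightarrow> real) \<Rightarrow> bool" where
  "Ck 0 f = continuous_on UNIV f"
| "Ck (Suc n) f = (f differentiable_on UNIV \<and> (\<forall>v. Ck n (\<lambda>x. frechet_derivative f (at x) v)))"

definition smooth_fun :: "('a::euclidean_space \<Rightarrow> real) \<Rightarrow> bool" where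
  "smooth_fun f \<longleftrightarrow> (\<forall>n. Ck n f)"

definition test_function :: "'a::euclidean_space set \<Rightarrow> ('a \<Rightarrow> real) \<Rightarrow> bool" where
  "test_function \<Omega> \<phi> \<longleftrightarrow> smooth_fun \<phi> \<and> compact (closure {x. \<phi> x \<noteq> 0})
      \<and> closure {x. \<phi> x \<noteq> 0} \<subseteq> \<Omega>"

definition in_Lr :: "'a::euclidean_space set \<Rightarrow> real \<Rightarrow> ('a \<Rightarrow> 'b::euclidean_space) \<Rightarrow> bool" where
  "in_Lr \<Omega> r f \<longleftrightarrow> set_borel_measurable lebesgue \<Omega> f
      \<and> set_integrable lebesgue \<Omega> (\<lambda>x. norm (f x) powr r)"

definition Lr_norm :: "'a::euclidean_space set \<Rightarrow> real \<Rightarrow> ('a \<Rightarrow> 'b::euclidean_space) \<Rightarrow> real" where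
  "Lr_norm \<Omega> r f = (LINT x:\<Omega>|lebesgue. norm (f x) powr r) powr (1 / r)"

definition weak_gradient :: "'a::euclidean_space set \<Rightarrow> ('a \<Rightarrow> real \<times> real) \<Rightarrow> ('a \<Rightarrow> 'a \<times> 'a) \<Rightarrow> bool" where
  "weak_gradient \<Omega> U G \<longleftrightarrow>
     (\<forall>\<phi>. test_function \<Omega> \<phi> \<longrightarrow> (\<forall>b\<in>Basis.
        (LINT x:\<Omega>|lebesgue. frechet_derivative \<phi> (at x) b *\<^sub>R U x)
        = - (LINT x:\<Omega>|lebesgue. \<phi> x *\<^sub>R (fst (G x) \<bullet> b, snd (G x) \<bullet> b))))"

definition Xp :: "'a::euclidean_space set \<Rightarrow> real \<Rightarrow> (('a \<Rightarrow> real \<times> real) \<times> ('a \<Rightarrow> 'a \<times> 'a)) set" where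
  "Xp \<Omega> p = {(U, G). in_Lr \<Omega> 2 U \<and> in_Lr \<Omega> p G \<and> weak_gradient \<Omega> U G}"

definition Xp_norm :: "'a::euclidean_space set \<Rightarrow> real \<Rightarrow> ('a \<Rightarrow> real \<times> real) \<times> ('a \<Rightarrow> 'a \<times> 'a) \<Rightarrow> real" where
  "Xp_norm \<Omega> p UG =
     (let U = fst UG; G = snd UG; q = (if p \<ge> 2 then p else p / (p - 1))
      in (Lr_norm \<Omega> 2 U powr q + Lr_norm \<Omega> p G powr q) powr (1 / q))"

definition Xp_add :: "('a \<Rightarrow> real \<times> real) \<times> ('a \<Rightarrow> 'a \<times> 'a) \<Rightarrow> ('a \<Rightarrow> real \<times> real) \<times> ('a \<Rightarrow> 'a \<times> 'a)
    \<Rightarrow> ('a \<Rightarrow> real \<times> real) \<times> ('a \<Rightarrow> 'a::euclidean_space \<times> 'a)" where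
  "Xp_add UG VH = ((\<lambda>x. fst UG x + fst VH x), (\<lambda>x. snd UG x + snd VH x))"

definition Xp_scale :: "real \<Rightarrow> ('a \<Rightarrow> real \<times> real) \<times> ('a \<Rightarrow> 'a \<times> 'a) \<Rightarrow> ('a \<Rightarrow> real \<times> real) \<times> ('a \<Rightarrow> 'a::euclidean_space \<times> 'a)" where
  "Xp_scale c UG = ((\<lambda>x. c *\<^sub>R fst UG x), (\<lambda>x. c *\<^sub>R snd UG x))"

definition Xp_uniformly_convex :: "'a::euclidean_space set \<Rightarrow> real \<Rightarrow> bool" where
  "Xp_uniformly_convex \<Omega> p \<longleftrightarrow>
     (\<forall>\<epsilon>>0. \<exists>\<delta>>0. \<forall>u\<in>Xp \<Omega> p. \<forall>v\<in>Xp \<Omega> p.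
        Xp_norm \<Omega> p u \<le> 1 \<longrightarrow> Xp_norm \<Omega> p v \<le> 1 \<longrightarrow>
        Xp_norm \<Omega> p (Xp_add u (Xp_scale (-1) v)) \<ge> \<epsilon> \<longrightarrow>
        Xp_norm \<Omega> p (Xp_scale (1/2) (Xp_add u v)) \<le> 1 - \<delta>)"

end

theory Submission
  imports Defs
begin


lemma powr_mid_convex:
  fixes x y r :: real
  assumes "x \<ge> 0" "y \<ge> 0" "r \<ge> 1"
  shows "((x + y) / 2) powr r \<le> (x powr r + y powr r) / 2"
proof (cases "x = 0 \<or> y = 0")
  case True
  have h2: "(2::real) \<le> 2 powr r" using powr_mono[of 1 r 2] assms by simp
  have "\<And>z::real. z \<ge> 0 \<Longrightarrow> (z / 2) powr r \<le> z powr r / 2"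
  proof -
    fix z :: real assume z: "z \<ge> 0"
    have "(z / 2) powr r = z powr r / 2 powr r" by (simp add: powr_divide z)
    also have "\<dots> \<le> z powr r / 2" using h2
      by (intro divide_left_mono) auto
    finally show "(z / 2) powr r \<le> z powr r / 2" .
  qed
  then show ?thesis using True assms by auto
next
  case False
  then have "x > 0" "y > 0" using assms by auto
  from convex_onD[OF powr_convex[OF assms(3)], of "1/2" x y] this
  show ?thesis by (simp add: field_simps)
qed

lemma powr_mid_strict:
  fixes x y r :: real
  assumes "0 \<le> y" "y < x" "r > 1"
  shows "((x + y) / 2) powr r < (x powr r + y powr r) / 2"
proof (cases "y = 0")
  case True
  have h2: "(2::real) < 2 powr r" using powr_less_mono[of 1 r 2] assms by simp
  have "(x / 2) powr r = x powr r / 2 powr r" by (simp add: powr_divide)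
  also have "\<dots> < x powr r / 2" using h2 assms
    by (intro divide_strict_left_mono) auto
  finally show ?thesis using True assms by simp
next
  case False
  define s where "s = (x + y) / 2"
  have ys: "y < s" "s < x" "y > 0" using assms False by (auto simp: s_def)
  have D: "\<And>z. z > 0 \<Longrightarrow> DERIV (\<lambda>t. t powr r) z :> r * z powr (r - 1)"
    by (auto intro!: derivative_eq_intros)
  obtain z1 where z1: "s < z1" "z1 < x" "x powr r - s powr r = (x - s) * (r * z1 powr (r - 1))"
    using MVT2[of s x "\<lambda>t. t powr r" "\<lambda>z. r * z powr (r - 1)"] D ys by force
  obtain z2 where z2: "y < z2" "z2 < s" "s powr r - y powr r = (s - y) * (r * z2 powr (r - 1))"
    using MVT2[of y s "\<lambda>t. t powr r" "\<lambda>z. r * z powr (r - 1)"] D ys by force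
  have "z2 powr (r - 1) < z1 powr (r - 1)"
    using z1 z2 ys assms by (intro powr_less_mono2) auto
  then have "r * z2 powr (r - 1) < r * z1 powr (r - 1)" using assms by simp
  moreover have "x - s = s - y" "x - s > 0" using ys by (auto simp: s_def field_simps)
  ultimately have "s powr r - y powr r < x powr r - s powr r"
    using z1 z2 by (metis mult_strict_left_mono)
  then show ?thesis by (simp add: s_def[symmetric])
qed



lemma norm_mid_powr:
  fixes a b :: "'b::real_normed_vector" and r :: real
  assumes "r \<ge> 1"
  shows "norm ((1/2) *\<^sub>R (a + b)) powr r \<le> (norm a powr r + norm b powr r) / 2"
proof -
  have "norm ((1/2) *\<^sub>R (a + b)) \<le> (norm a + norm b) / 2"
    using norm_triangle_ineq[of a b] by simp
  then have "norm ((1/2) *\<^sub>R (a + b)) powr r \<le> ((norm a + norm b) / 2) powr r"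
    using assms by (intro powr_mono2) auto
  also have "\<dots> \<le> (norm a powr r + norm b powr r) / 2"
    using assms by (intro powr_mid_convex) auto
  finally show ?thesis .
qed

lemma sum_powr_le:
  fixes x y r :: real
  assumes "x \<ge> 0" "y \<ge> 0" "r \<ge> 1"
  shows "(x + y) powr r \<le> 2 powr r * ((x powr r + y powr r) / 2)"
proof -
  have "(x + y) powr r = 2 powr r * (((x + y) / 2) powr r)"
    using assms by (simp add: powr_divide)
  also have "\<dots> \<le> 2 powr r * ((x powr r + y powr r) / 2)"
    using powr_mid_convex[OF assms] by (intro mult_left_mono) auto
  finally show ?thesis .
qed

lemma norm_mid_powr_strict:
  fixes a b :: "'b::euclidean_space" and r :: real
  assumes "r > 1" "a \<noteq> b"
  shows "norm ((1/2) *\<^sub>R (a + b)) powr r < (norm a powr r + norm b powr r) / 2"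
proof (cases "norm a = norm b")
  case True
  have "norm (a + b) \<noteq> norm a + norm b"
  proof
    assume "norm (a + b) = norm a + norm b"
    then have "norm a *\<^sub>R b = norm b *\<^sub>R a" by (simp add: norm_triangle_eq)
    with True assms(2) show False
      by (metis norm_eq_zero scaleR_cancel_left)
  qed
  then have "norm (a + b) < norm a + norm b"
    using norm_triangle_ineq[of a b] by linarith
  then have "norm ((1/2) *\<^sub>R (a + b)) < (norm a + norm b) / 2" by simp
  then have "norm ((1/2) *\<^sub>R (a + b)) powr r < ((norm a + norm b) / 2) powr r"
    using assms by (intro powr_less_mono2) auto
  also have "\<dots> = (norm a powr r + norm b powr r) / 2" using True by simp
  finally show ?thesis .
next
  case False
  have "norm ((1/2) *\<^sub>R (a + b)) powr r \<le> ((norm a + norm b) / 2) powr r"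
    using assms norm_triangle_ineq[of a b] by (intro powr_mono2) auto
  also have "\<dots> < (norm a powr r + norm b powr r) / 2"
  proof (cases "norm b < norm a")
    case True
    then show ?thesis using powr_mid_strict[of "norm b" "norm a" r] assms by simp
  next
    case False
    then have "norm a < norm b" using \<open>norm a \<noteq> norm b\<close> by simp
    then show ?thesis using powr_mid_strict[of "norm a" "norm b" r] assms by (simp add: add.commute)
  qed
  finally show ?thesis .
qed



lemma uc_pointwise_region:
  fixes r \<tau> :: real
  assumes r: "r > 1" and tau: "\<tau> > 0"
  shows "\<exists>c>0. \<forall>a b::'b::euclidean_space. \<tau> * (norm a + norm b) \<le> norm (a - b) \<longrightarrow>
     norm ((1/2) *\<^sub>R (a + b)) powr r + c * norm (a - b) powr r \<le> (norm a powr r + norm b powr r) / 2"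
proof -
  define S where "S = {z::'b\<times>'b. norm (fst z) + norm (snd z) = 1 \<and> \<tau> \<le> norm (fst z - snd z)}"
  define \<Phi> where "\<Phi> z = (norm (fst z) powr r + norm (snd z) powr r) / 2
      - norm ((1/2) *\<^sub>R (fst z + snd z)) powr r" for z :: "'b\<times>'b"
  have key: "(a /\<^sub>R l, b /\<^sub>R l) \<in> S" if "l = norm a + norm b" "l > 0" "\<tau> * (norm a + norm b) \<le> norm (a - b)"
    for a b :: 'b and l :: real
  proof -
    have "norm (a /\<^sub>R l - b /\<^sub>R l) = norm (a - b) / l"
      using that by (simp add: scaleR_diff_right[symmetric] divide_inverse_commute)
    moreover have "norm (a /\<^sub>R l) + norm (b /\<^sub>R l) = 1" using that by (simp add: distrib_left[symmetric])
    ultimately show ?thesis using that unfolding S_def by (simp add: pos_le_divide_eq mult.commute)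
  qed
  have trivial: "norm ((1/2) *\<^sub>R (a + b)) powr r + c * norm (a - b) powr r \<le> (norm a powr r + norm b powr r) / 2"
    if "norm a + norm b = 0" for a b :: 'b and c :: real
  proof -
    have "a = 0" "b = 0" using that by (metis add_nonneg_eq_0_iff norm_ge_zero norm_eq_zero)+
    then show ?thesis by simp
  qed
  show ?thesis
  proof (cases "S = {}")
    case True
    show ?thesis
    proof (intro exI[of _ 1] conjI allI impI)
      fix a b :: 'b assume h: "\<tau> * (norm a + norm b) \<le> norm (a - b)"
      show "norm ((1/2) *\<^sub>R (a + b)) powr r + 1 * norm (a - b) powr r \<le> (norm a powr r + norm b powr r) / 2"
      proof (cases "norm a + norm b = 0")
        case True then show ?thesis by (rule trivial)
      next
        case False
        then have "norm a + norm b > 0" by (simp add: add_pos_nonneg order_le_neq_trans)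
        from key[OF refl this h] \<open>S = {}\<close> show ?thesis by simp
      qed
    qed simp
  next
    case False
    have bS: "bounded S"
    proof -
      have "S \<subseteq> cball 0 1"
      proof
        fix z assume "z \<in> S"
        then have "norm (fst z) + norm (snd z) = 1" by (simp add: S_def)
        moreover have "norm z \<le> norm (fst z) + norm (snd z)"
          by (metis norm_Pair_le prod.collapse norm_triangle_ineq order.trans)
        ultimately show "z \<in> cball 0 1" by simp
      qed
      then show ?thesis using bounded_cball bounded_subset by blast
    qed
    have clS: "closed S" unfolding S_def
      by (intro closed_Collect_conj closed_Collect_eq closed_Collect_le continuous_intros)
    have cS: "compact S" using bS clS by (simp add: compact_eq_bounded_closed)
    have contP: "continuous_on S \<Phi>" unfolding \<Phi>_def using r
      by (intro continuous_intros continuous_on_powr') auto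
    obtain z0 where z0: "z0 \<in> S" "\<And>z. z \<in> S \<Longrightarrow> \<Phi> z0 \<le> \<Phi> z"
      using continuous_attains_inf[OF cS False contP] by blast
    have "fst z0 \<noteq> snd z0" using z0(1) tau by (auto simp: S_def)
    then have mu: "\<Phi> z0 > 0" unfolding \<Phi>_def using norm_mid_powr_strict[OF r] by simp
    show ?thesis
    proof (intro exI[of _ "\<Phi> z0"] conjI allI impI mu)
      fix a b :: 'b assume h: "\<tau> * (norm a + norm b) \<le> norm (a - b)"
      show "norm ((1/2) *\<^sub>R (a + b)) powr r + \<Phi> z0 * norm (a - b) powr r \<le> (norm a powr r + norm b powr r) / 2"
      proof (cases "norm a + norm b = 0")
        case True then show ?thesis by (rule trivial)
      next
        case False
        define l where "l = norm a + norm b"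
        have l: "l > 0" using False by (simp add: l_def add_pos_nonneg order_le_neq_trans)
        have "\<Phi> z0 \<le> \<Phi> (a /\<^sub>R l, b /\<^sub>R l)" using key[OF l_def l h] z0(2) by simp
        also have "\<Phi> (a /\<^sub>R l, b /\<^sub>R l) = \<Phi> (a, b) / l powr r"
        proof -
          have nd: "norm (x /\<^sub>R l) = norm x / l" for x :: 'b
            using l by (simp add: divide_inverse_commute)
          have e1: "norm (a /\<^sub>R l) powr r = norm a powr r / l powr r"
            unfolding nd using l by (simp add: powr_divide)
          have e2: "norm (b /\<^sub>R l) powr r = norm b powr r / l powr r"
            unfolding nd using l by (simp add: powr_divide)
          have "(1/2) *\<^sub>R (a /\<^sub>R l + b /\<^sub>R l) = ((1/2) *\<^sub>R (a + b)) /\<^sub>R l"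
            by (simp add: scaleR_add_right)
          then have e3: "norm ((1/2) *\<^sub>R (a /\<^sub>R l + b /\<^sub>R l)) powr r
                = norm ((1/2) *\<^sub>R (a + b)) powr r / l powr r"
            using nd[of "(1/2) *\<^sub>R (a + b)"] by (simp only: powr_divide)
          have g: "(x / L + y / L) / 2 - z / L = ((x + y) / 2 - z) / L" for x y z L :: real
            by (simp add: diff_divide_distrib add_divide_distrib)
          show ?thesis unfolding \<Phi>_def fst_conv snd_conv e1 e2 e3 by (rule g)
        qed
        finally have "\<Phi> z0 * l powr r \<le> \<Phi> (a, b)" using l by (simp add: pos_le_divide_eq)
        moreover have "norm (a - b) powr r \<le> l powr r"
          using norm_triangle_ineq4[of a b] r by (intro powr_mono2) (auto simp: l_def)
        ultimately have "\<Phi> z0 * norm (a - b) powr r \<le> \<Phi> (a, b)"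
          using mu by (meson mult_left_mono less_imp_le order_trans)
        then show ?thesis unfolding \<Phi>_def[of "(a, b)"] fst_conv snd_conv by linarith
      qed
    qed
  qed
qed



lemma uc_pointwise:
  fixes r \<tau> :: real
  assumes r: "r > 1" and tau: "\<tau> > 0"
  shows "\<exists>c>0. \<forall>a b::'b::euclidean_space.
     norm ((1/2) *\<^sub>R (a + b)) powr r + c * norm (a - b) powr r
       \<le> (1 + c * (2 powr r * \<tau> powr r)) * ((norm a powr r + norm b powr r) / 2)"
proof -
  obtain c where c: "c > 0" and hc: "\<And>a b::'b. \<tau> * (norm a + norm b) \<le> norm (a - b) \<Longrightarrow>
     norm ((1/2) *\<^sub>R (a + b)) powr r + c * norm (a - b) powr r \<le> (norm a powr r + norm b powr r) / 2"
    using uc_pointwise_region[OF r tau] by blast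
  show ?thesis
  proof (intro exI[of _ c] conjI allI c)
    fix a b :: 'b
    define A where "A = (norm a powr r + norm b powr r) / 2"
    have A0: "A \<ge> 0" by (simp add: A_def)
    have extra: "0 \<le> c * (2 powr r * \<tau> powr r) * A" using c A0 by simp
    show "norm ((1/2) *\<^sub>R (a + b)) powr r + c * norm (a - b) powr r
       \<le> (1 + c * (2 powr r * \<tau> powr r)) * ((norm a powr r + norm b powr r) / 2)"
    proof (cases "\<tau> * (norm a + norm b) \<le> norm (a - b)")
      case True
      from hc[OF True] extra show ?thesis unfolding A_def by (simp add: algebra_simps)
    next
      case False
      have "norm (a - b) powr r \<le> (\<tau> * (norm a + norm b)) powr r"
        using False r by (intro powr_mono2) auto
      also have "\<dots> = \<tau> powr r * (norm a + norm b) powr r"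
        using tau by (simp add: powr_mult)
      also have "\<dots> \<le> \<tau> powr r * (2 powr r * A)"
        unfolding A_def using r by (intro mult_left_mono sum_powr_le) auto
      finally have "c * norm (a - b) powr r \<le> c * (2 powr r * \<tau> powr r) * A"
        using c by (simp add: mult_left_mono algebra_simps)
      moreover have "norm ((1/2) *\<^sub>R (a + b)) powr r \<le> A"
        unfolding A_def using norm_mid_powr[of r a b] r by simp
      ultimately show ?thesis unfolding A_def[symmetric] by (simp add: algebra_simps)
    qed
  qed
qed

definition Ipow :: "'m measure \<Rightarrow> real \<Rightarrow> ('m \<Rightarrow> 'b::real_normed_vector) \<Rightarrow> real" where
  "Ipow M r h = integral\<^sup>L M (\<lambda>x. norm (h x) powr r)"

lemma Ipow_nonneg: "Ipow M r h \<ge> 0"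
  unfolding Ipow_def by (simp add: integral_nonneg_AE)

lemma Ipow_basic:
  fixes F G :: "'m \<Rightarrow> 'b::euclidean_space" and r :: real
  assumes r: "r \<ge> 1"
    and F: "F \<in> borel_measurable M" and G: "G \<in> borel_measurable M"
    and iF: "integrable M (\<lambda>x. norm (F x) powr r)" and iG: "integrable M (\<lambda>x. norm (G x) powr r)"
  shows "integrable M (\<lambda>x. norm ((1/2) *\<^sub>R (F x + G x)) powr r)"
    and "integrable M (\<lambda>x. norm (F x - G x) powr r)"
    and "Ipow M r (\<lambda>x. (1/2) *\<^sub>R (F x + G x)) \<le> (Ipow M r F + Ipow M r G) / 2"
    and "Ipow M r (\<lambda>x. F x - G x) \<le> 2 powr r * ((Ipow M r F + Ipow M r G) / 2)"
proof -
  have iA: "integrable M (\<lambda>x. (norm (F x) powr r + norm (G x) powr r) / 2)"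
    using iF iG by simp
  have iB: "integrable M (\<lambda>x. 2 powr r * ((norm (F x) powr r + norm (G x) powr r) / 2))"
    using iF iG by simp
  have pm: "norm ((1/2) *\<^sub>R (F x + G x)) powr r \<le> (norm (F x) powr r + norm (G x) powr r) / 2" for x
    using norm_mid_powr[OF r] .
  have pd: "norm (F x - G x) powr r \<le> 2 powr r * ((norm (F x) powr r + norm (G x) powr r) / 2)" for x
  proof -
    have "norm (F x - G x) powr r \<le> (norm (F x) + norm (G x)) powr r"
      using r norm_triangle_ineq4[of "F x" "G x"] by (intro powr_mono2) auto
    also have "\<dots> \<le> 2 powr r * ((norm (F x) powr r + norm (G x) powr r) / 2)"
      using r by (intro sum_powr_le) auto
    finally show ?thesis .
  qed
  show im: "integrable M (\<lambda>x. norm ((1/2) *\<^sub>R (F x + G x)) powr r)"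
    by (rule Bochner_Integration.integrable_bound[OF iA]) (use F G pm in auto)
  show id: "integrable M (\<lambda>x. norm (F x - G x) powr r)"
    by (rule Bochner_Integration.integrable_bound[OF iB]) (use F G pd in auto)
  have "Ipow M r (\<lambda>x. (1/2) *\<^sub>R (F x + G x)) \<le> integral\<^sup>L M (\<lambda>x. (norm (F x) powr r + norm (G x) powr r) / 2)"
    unfolding Ipow_def by (rule integral_mono[OF im iA pm])
  also have "\<dots> = (Ipow M r F + Ipow M r G) / 2"
    unfolding Ipow_def using iF iG by simp
  finally show "Ipow M r (\<lambda>x. (1/2) *\<^sub>R (F x + G x)) \<le> (Ipow M r F + Ipow M r G) / 2" .
  have "Ipow M r (\<lambda>x. F x - G x) \<le> integral\<^sup>L M (\<lambda>x. 2 powr r * ((norm (F x) powr r + norm (G x) powr r) / 2))"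
    unfolding Ipow_def by (rule integral_mono[OF id iB pd])
  also have "\<dots> = 2 powr r * ((Ipow M r F + Ipow M r G) / 2)"
    unfolding Ipow_def using iF iG by simp
  finally show "Ipow M r (\<lambda>x. F x - G x) \<le> 2 powr r * ((Ipow M r F + Ipow M r G) / 2)" .
qed



lemma uc_integral:
  fixes r \<epsilon> :: real
  assumes r: "r > 1" and eps: "\<epsilon> > 0"
  shows "\<exists>\<delta>>0. \<delta> \<le> 1 \<and> (\<forall>F G::'m \<Rightarrow> 'b::euclidean_space.
     F \<in> borel_measurable M \<longrightarrow> G \<in> borel_measurable M \<longrightarrow>
     integrable M (\<lambda>x. norm (F x) powr r) \<longrightarrow> integrable M (\<lambda>x. norm (G x) powr r) \<longrightarrow>
     \<epsilon> * ((Ipow M r F + Ipow M r G) / 2) \<le> Ipow M r (\<lambda>x. F x - G x) \<longrightarrow>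
     Ipow M r (\<lambda>x. (1/2) *\<^sub>R (F x + G x)) \<le> (1 - \<delta>) * ((Ipow M r F + Ipow M r G) / 2))"
proof -
  define \<tau> where "\<tau> = ((\<epsilon> / 2) / 2 powr r) powr (1 / r)"
  have tau: "\<tau> > 0" using eps by (simp add: \<tau>_def)
  have tr: "2 powr r * \<tau> powr r = \<epsilon> / 2"
  proof -
    have "\<tau> powr r = (\<epsilon> / 2) / 2 powr r" unfolding \<tau>_def powr_powr
      using r eps by (simp add: powr_one)
    then show ?thesis by simp
  qed
  obtain c where c: "c > 0" and hc: "\<And>a b::'b. norm ((1/2) *\<^sub>R (a + b)) powr r + c * norm (a - b) powr r
       \<le> (1 + c * (2 powr r * \<tau> powr r)) * ((norm a powr r + norm b powr r) / 2)"
    using uc_pointwise[OF r tau] by blast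
  define \<delta> where "\<delta> = min (c * \<epsilon> / 2) 1"
  show ?thesis
  proof (intro exI[of _ \<delta>] conjI allI impI)
    show "\<delta> > 0" "\<delta> \<le> 1" using c eps by (auto simp: \<delta>_def)
    fix F G :: "'m \<Rightarrow> 'b"
    assume F: "F \<in> borel_measurable M" and G: "G \<in> borel_measurable M"
      and iF: "integrable M (\<lambda>x. norm (F x) powr r)" and iG: "integrable M (\<lambda>x. norm (G x) powr r)"
      and hd: "\<epsilon> * ((Ipow M r F + Ipow M r G) / 2) \<le> Ipow M r (\<lambda>x. F x - G x)"
    have r1: "1 \<le> r" using r by simp
    note b = Ipow_basic[OF r1 F G iF iG]
    define A where "A = (Ipow M r F + Ipow M r G) / 2"
    have A0: "A \<ge> 0" unfolding A_def using Ipow_nonneg[of M r F] Ipow_nonneg[of M r G] by simp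
    have "integral\<^sup>L M (\<lambda>x. norm ((1/2) *\<^sub>R (F x + G x)) powr r + c * norm (F x - G x) powr r)
        \<le> integral\<^sup>L M (\<lambda>x. (1 + c * (\<epsilon> / 2)) * ((norm (F x) powr r + norm (G x) powr r) / 2))"
      using b r iF iG hc[unfolded tr] by (intro integral_mono) auto
    then have "Ipow M r (\<lambda>x. (1/2) *\<^sub>R (F x + G x)) + c * Ipow M r (\<lambda>x. F x - G x)
        \<le> (1 + c * (\<epsilon> / 2)) * A"
      unfolding Ipow_def A_def using b r iF iG by simp
    with hd c have "Ipow M r (\<lambda>x. (1/2) *\<^sub>R (F x + G x)) \<le> (1 + c * (\<epsilon> / 2)) * A - c * (\<epsilon> * A)"
      unfolding A_def[symmetric] by (smt (verit) mult_left_mono)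
    also have "\<dots> = (1 - c * \<epsilon> / 2) * A" by (simp add: algebra_simps)
    also have "\<dots> \<le> (1 - \<delta>) * A" using A0 by (intro mult_right_mono) (auto simp: \<delta>_def)
    finally show "Ipow M r (\<lambda>x. (1/2) *\<^sub>R (F x + G x)) \<le> (1 - \<delta>) * ((Ipow M r F + Ipow M r G) / 2)"
      unfolding A_def .
  qed
qed



lemma powr_inv_le: 
  fixes x y t :: real
  assumes "x \<ge> 0" "t > 0" "x powr t \<le> y"
  shows "x \<le> y powr (1 / t)"
proof -
  have "x = (x powr t) powr (1 / t)" using assms by (simp add: powr_powr powr_one)
  also have "\<dots> \<le> y powr (1 / t)" using assms by (intro powr_mono2) auto
  finally show ?thesis .
qed

lemma powr_inv_ge: 
  fixes x y t :: real
  assumes "y \<ge> 0" "x \<ge> 0" "t > 0" "y \<le> x powr t"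
  shows "y powr (1 / t) \<le> x"
proof -
  have "y powr (1 / t) \<le> (x powr t) powr (1 / t)" using assms by (intro powr_mono2) auto
  also have "\<dots> = x" using assms by (simp add: powr_powr powr_one)
  finally show ?thesis .
qed

lemma real_fac:
  fixes Iu Iv Im Id r t e \<delta> :: real
  assumes t: "t \<ge> 1" and e: "e > 0" and d: "0 < \<delta>" "\<delta> \<le> 1"
    and nn: "Iu \<ge> 0" "Iv \<ge> 0" "Im \<ge> 0" "Id \<ge> 0"
    and u1: "Iu powr t \<le> 1" and v1: "Iv powr t \<le> 1" and de: "e \<le> Id powr t"
    and dbound: "Id \<le> 2 powr r * ((Iu + Iv) / 2)"
    and uc: "e powr (1 / t) * ((Iu + Iv) / 2) \<le> Id \<Longrightarrow> Im \<le> (1 - \<delta>) * ((Iu + Iv) / 2)"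
  shows "Im powr t \<le> (Iu powr t + Iv powr t) / 2 - \<delta> * (e / 2 powr (r * t))"
proof -
  define Y where "Y = (Iu + Iv) / 2"
  have Y0: "Y \<ge> 0" using nn by (simp add: Y_def)
  have "Iu \<le> 1" using powr_inv_le[OF nn(1) _ u1] t by simp
  moreover have "Iv \<le> 1" using powr_inv_le[OF nn(2) _ v1] t by simp
  ultimately have Y1: "Y \<le> 1" by (simp add: Y_def)
  have "e powr (1 / t) \<le> Id" using powr_inv_ge[OF _ nn(4) _ de] e t by simp
  moreover have "e powr (1 / t) * Y \<le> e powr (1 / t)" using Y1 by (simp add: mult_left_le)
  ultimately have "Im \<le> (1 - \<delta>) * Y" using uc unfolding Y_def by linarith
  then have "Im powr t \<le> ((1 - \<delta>) * Y) powr t" using nn t by (intro powr_mono2) auto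
  also have "\<dots> = (1 - \<delta>) powr t * Y powr t" by (simp add: powr_mult)
  also have "\<dots> \<le> (1 - \<delta>) * Y powr t"
  proof (rule mult_right_mono)
    show "(1 - \<delta>) powr t \<le> 1 - \<delta>"
      using powr_mono'[of 1 t "1 - \<delta>"] t d by simp
  qed simp
  finally have h1: "Im powr t \<le> Y powr t - \<delta> * Y powr t" by (simp add: algebra_simps)
  have "(Id / 2 powr r) powr t \<le> Y powr t"
    using dbound nn t unfolding Y_def by (intro powr_mono2) (auto simp: divide_le_eq mult.commute)
  moreover have "(Id / 2 powr r) powr t = Id powr t / 2 powr (r * t)"
    by (simp add: powr_divide powr_powr)
  ultimately have "e / 2 powr (r * t) \<le> Y powr t" using de
    by (smt (verit) divide_right_mono powr_ge_zero)
  then have "\<delta> * (e / 2 powr (r * t)) \<le> \<delta> * Y powr t" using d by (intro mult_left_mono) auto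
  moreover have "Y powr t \<le> (Iu powr t + Iv powr t) / 2"
    unfolding Y_def using nn t by (intro powr_mid_convex) auto
  ultimately show ?thesis using h1 by linarith
qed



lemma fac_always:
  fixes F G :: "'m \<Rightarrow> 'b::euclidean_space" and r t :: real
  assumes r: "r \<ge> 1" and t: "t \<ge> 1"
    and F: "F \<in> borel_measurable M" and G: "G \<in> borel_measurable M"
    and iF: "integrable M (\<lambda>x. norm (F x) powr r)" and iG: "integrable M (\<lambda>x. norm (G x) powr r)"
  shows "Ipow M r (\<lambda>x. (1/2) *\<^sub>R (F x + G x)) powr t \<le> (Ipow M r F powr t + Ipow M r G powr t) / 2"
proof -
  have "Ipow M r (\<lambda>x. (1/2) *\<^sub>R (F x + G x)) powr t \<le> ((Ipow M r F + Ipow M r G) / 2) powr t"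
    using Ipow_basic(3)[OF r F G iF iG] t by (intro powr_mono2) (auto simp: Ipow_nonneg)
  also have "\<dots> \<le> (Ipow M r F powr t + Ipow M r G powr t) / 2"
    using t by (intro powr_mid_convex) (auto simp: Ipow_nonneg)
  finally show ?thesis .
qed

lemma fac_uc:
  fixes r t e :: real
  assumes r: "r > 1" and t: "t \<ge> 1" and e: "e > 0"
  shows "\<exists>\<kappa>>0. \<forall>F G::'m \<Rightarrow> 'b::euclidean_space.
     F \<in> borel_measurable M \<longrightarrow> G \<in> borel_measurable M \<longrightarrow>
     integrable M (\<lambda>x. norm (F x) powr r) \<longrightarrow> integrable M (\<lambda>x. norm (G x) powr r) \<longrightarrow>
     Ipow M r F powr t \<le> 1 \<longrightarrow> Ipow M r G powr t \<le> 1 \<longrightarrow>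
     e \<le> Ipow M r (\<lambda>x. F x - G x) powr t \<longrightarrow>
     Ipow M r (\<lambda>x. (1/2) *\<^sub>R (F x + G x)) powr t \<le> (Ipow M r F powr t + Ipow M r G powr t) / 2 - \<kappa>"
proof -
  have e1: "e powr (1 / t) > 0" using e by simp
  obtain \<delta> where d: "\<delta> > 0" "\<delta> \<le> 1" and hd: "\<And>F G::'m \<Rightarrow> 'b.
     F \<in> borel_measurable M \<Longrightarrow> G \<in> borel_measurable M \<Longrightarrow>
     integrable M (\<lambda>x. norm (F x) powr r) \<Longrightarrow> integrable M (\<lambda>x. norm (G x) powr r) \<Longrightarrow>
     e powr (1 / t) * ((Ipow M r F + Ipow M r G) / 2) \<le> Ipow M r (\<lambda>x. F x - G x) \<Longrightarrow>
     Ipow M r (\<lambda>x. (1/2) *\<^sub>R (F x + G x)) \<le> (1 - \<delta>) * ((Ipow M r F + Ipow M r G) / 2)"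
    using uc_integral[OF r e1, where M=M] by blast
  show ?thesis
  proof (intro exI[of _ "\<delta> * (e / 2 powr (r * t))"] conjI allI impI)
    show "\<delta> * (e / 2 powr (r * t)) > 0" using d e by simp
    fix F G :: "'m \<Rightarrow> 'b"
    assume F: "F \<in> borel_measurable M" and G: "G \<in> borel_measurable M"
      and iF: "integrable M (\<lambda>x. norm (F x) powr r)" and iG: "integrable M (\<lambda>x. norm (G x) powr r)"
      and u1: "Ipow M r F powr t \<le> 1" and v1: "Ipow M r G powr t \<le> 1"
      and de: "e \<le> Ipow M r (\<lambda>x. F x - G x) powr t"
    have r1: "r \<ge> 1" using r by simp
    show "Ipow M r (\<lambda>x. (1/2) *\<^sub>R (F x + G x)) powr t
        \<le> (Ipow M r F powr t + Ipow M r G powr t) / 2 - \<delta> * (e / 2 powr (r * t))"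
      by (rule real_fac[OF t e d Ipow_nonneg Ipow_nonneg Ipow_nonneg Ipow_nonneg u1 v1 de
            Ipow_basic(4)[OF r1 F G iF iG] hd[OF F G iF iG]])
  qed
qed

lemma Lr_transfer:
  fixes f :: "'a::euclidean_space \<Rightarrow> 'b::euclidean_space"
  assumes "in_Lr \<Omega> r f"
  shows "(\<lambda>x. indicator \<Omega> x *\<^sub>R f x) \<in> borel_measurable lebesgue"
    and "integrable lebesgue (\<lambda>x. norm (indicator \<Omega> x *\<^sub>R f x) powr r)"
proof -
  show "(\<lambda>x. indicator \<Omega> x *\<^sub>R f x) \<in> borel_measurable lebesgue"
    using assms by (simp add: in_Lr_def set_borel_measurable_def)
  have "(\<lambda>x. norm (indicator \<Omega> x *\<^sub>R f x) powr r) = (\<lambda>x. indicator \<Omega> x *\<^sub>R (norm (f x) powr r))"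
    by (auto simp: indicator_def)
  then show "integrable lebesgue (\<lambda>x. norm (indicator \<Omega> x *\<^sub>R f x) powr r)"
    using assms by (simp add: in_Lr_def set_integrable_def)
qed

lemma LINT_Ipow:
  fixes h :: "'a::euclidean_space \<Rightarrow> 'b::euclidean_space"
  shows "(LINT x:\<Omega>|lebesgue. norm (h x) powr r) = Ipow lebesgue r (\<lambda>x. indicator \<Omega> x *\<^sub>R h x)"
proof -
  have "(\<lambda>x. norm (indicator \<Omega> x *\<^sub>R h x) powr r) = (\<lambda>x. indicator \<Omega> x *\<^sub>R (norm (h x) powr r))"
    by (auto simp: indicator_def)
  then show ?thesis by (simp add: Ipow_def set_lebesgue_integral_def)
qed

lemma Lr_norm_Ipow:
  "Lr_norm \<Omega> r h = Ipow lebesgue r (\<lambda>x. indicator \<Omega> x *\<^sub>R h x) powr (1 / r)"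
  unfolding Lr_norm_def LINT_Ipow ..



lemma rt_le1:
  fixes s q :: real
  assumes "s \<ge> 0" "q > 0" "s powr (1 / q) \<le> 1"
  shows "s \<le> 1"
proof -
  have "s = (s powr (1 / q)) powr q" using assms by (simp add: powr_powr powr_one)
  also have "\<dots> \<le> 1 powr q" using assms by (intro powr_mono2) auto
  finally show ?thesis by simp
qed

lemma rt_ge:
  fixes s q \<epsilon> :: real
  assumes "s \<ge> 0" "q > 0" "\<epsilon> > 0" "\<epsilon> \<le> s powr (1 / q)"
  shows "\<epsilon> powr q \<le> s"
proof -
  have "\<epsilon> powr q \<le> (s powr (1 / q)) powr q" using assms by (intro powr_mono2) auto
  also have "\<dots> = s" using assms by (simp add: powr_powr powr_one)
  finally show ?thesis .
qed

theorem mainTheorem10: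
  fixes \<Omega> :: "'a::euclidean_space set" and p :: real
  assumes "open \<Omega>" and "connected \<Omega>" and "\<Omega> \<noteq> {}"
    and "p > max 1 (2 * real DIM('a) / (real DIM('a) + 2))"
  shows "Xp_uniformly_convex \<Omega> p"
proof -
  define q where "q = (if p \<ge> 2 then p else p / (p - 1))"
  have p1: "p > 1" using assms(4) by simp
  have q2: "q \<ge> 2" and qp: "q \<ge> p"
  proof -
    have "q \<ge> 2 \<and> q \<ge> p"
    proof (cases "p \<ge> 2")
      case True then show ?thesis by (simp add: q_def)
    next
      case False
      then have "p / (p - 1) \<ge> 2" "p / (p - 1) \<ge> p" using p1 by (auto simp: field_simps)
      then show ?thesis using False by (simp add: q_def)
    qed
    then show "q \<ge> 2" "q \<ge> p" by auto
  qed
  have q0: "q > 0" using q2 by simp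
  have tA: "q / 2 \<ge> 1" using q2 by simp
  have tB: "q / p \<ge> 1" using qp p1 by simp
  have r2: "(2::real) > 1" by simp
  have fmla: "Xp_norm \<Omega> p (X, Y) =
      (Ipow lebesgue 2 (\<lambda>x. indicator \<Omega> x *\<^sub>R X x) powr (q / 2)
       + Ipow lebesgue p (\<lambda>x. indicator \<Omega> x *\<^sub>R Y x) powr (q / p)) powr (1 / q)"
    for X :: "'a \<Rightarrow> real \<times> real" and Y :: "'a \<Rightarrow> 'a \<times> 'a"
    unfolding Xp_norm_def Let_def q_def[symmetric] fst_conv snd_conv Lr_norm_Ipow powr_powr
    by simp
  show ?thesis unfolding Xp_uniformly_convex_def
  proof (intro allI impI)
    fix \<epsilon> :: real assume eps: "\<epsilon> > 0"
    define e where "e = \<epsilon> powr q / 2"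
    have e: "e > 0" using eps by (simp add: e_def)
    obtain \<kappa>A where kA: "\<kappa>A > 0" and hA: "\<And>F G::'a \<Rightarrow> real \<times> real.
     F \<in> borel_measurable lebesgue \<Longrightarrow> G \<in> borel_measurable lebesgue \<Longrightarrow>
     integrable lebesgue (\<lambda>x. norm (F x) powr 2) \<Longrightarrow> integrable lebesgue (\<lambda>x. norm (G x) powr 2) \<Longrightarrow>
     Ipow lebesgue 2 F powr (q/2) \<le> 1 \<Longrightarrow> Ipow lebesgue 2 G powr (q/2) \<le> 1 \<Longrightarrow>
     e \<le> Ipow lebesgue 2 (\<lambda>x. F x - G x) powr (q/2) \<Longrightarrow>
     Ipow lebesgue 2 (\<lambda>x. (1/2) *\<^sub>R (F x + G x)) powr (q/2)
        \<le> (Ipow lebesgue 2 F powr (q/2) + Ipow lebesgue 2 G powr (q/2)) / 2 - \<kappa>A"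
      using fac_uc[OF r2 tA e, where M=lebesgue and 'b="real \<times> real"] by blast
    obtain \<kappa>B where kB: "\<kappa>B > 0" and hB: "\<And>F G::'a \<Rightarrow> 'a \<times> 'a.
     F \<in> borel_measurable lebesgue \<Longrightarrow> G \<in> borel_measurable lebesgue \<Longrightarrow>
     integrable lebesgue (\<lambda>x. norm (F x) powr p) \<Longrightarrow> integrable lebesgue (\<lambda>x. norm (G x) powr p) \<Longrightarrow>
     Ipow lebesgue p F powr (q/p) \<le> 1 \<Longrightarrow> Ipow lebesgue p G powr (q/p) \<le> 1 \<Longrightarrow>
     e \<le> Ipow lebesgue p (\<lambda>x. F x - G x) powr (q/p) \<Longrightarrow>
     Ipow lebesgue p (\<lambda>x. (1/2) *\<^sub>R (F x + G x)) powr (q/p)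
        \<le> (Ipow lebesgue p F powr (q/p) + Ipow lebesgue p G powr (q/p)) / 2 - \<kappa>B"
      using fac_uc[OF p1 tB e, where M=lebesgue and 'b="'a \<times> 'a"] by blast
    define \<kappa> where "\<kappa> = min (min \<kappa>A \<kappa>B) (1/2)"
    have k: "\<kappa> > 0" "\<kappa> \<le> \<kappa>A" "\<kappa> \<le> \<kappa>B" "\<kappa> \<le> 1/2" using kA kB by (auto simp: \<kappa>_def)
    define \<delta> where "\<delta> = 1 - (1 - \<kappa>) powr (1 / q)"
    have "(1 - \<kappa>) powr (1 / q) < 1 powr (1 / q)" using k q0 by (intro powr_less_mono2) auto
    then have dpos: "\<delta> > 0" by (simp add: \<delta>_def)
    show "\<exists>\<delta>>0. \<forall>u\<in>Xp \<Omega> p. \<forall>v\<in>Xp \<Omega> p.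
        Xp_norm \<Omega> p u \<le> 1 \<longrightarrow> Xp_norm \<Omega> p v \<le> 1 \<longrightarrow>
        \<epsilon> \<le> Xp_norm \<Omega> p (Xp_add u (Xp_scale (-1) v)) \<longrightarrow>
        Xp_norm \<Omega> p (Xp_scale (1/2) (Xp_add u v)) \<le> 1 - \<delta>"
    proof (intro exI[of _ \<delta>] conjI dpos ballI impI)
      fix u v assume uX: "u \<in> Xp \<Omega> p" and vX: "v \<in> Xp \<Omega> p"
        and nu: "Xp_norm \<Omega> p u \<le> 1" and nv: "Xp_norm \<Omega> p v \<le> 1"
        and nd: "\<epsilon> \<le> Xp_norm \<Omega> p (Xp_add u (Xp_scale (-1) v))"
      obtain U G where u: "u = (U, G)" by (cases u)
      obtain V H where v: "v = (V, H)" by (cases v)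
      have LU: "in_Lr \<Omega> 2 U" and LG: "in_Lr \<Omega> p G" using uX u by (auto simp: Xp_def)
      have LV: "in_Lr \<Omega> 2 V" and LH: "in_Lr \<Omega> p H" using vX v by (auto simp: Xp_def)
      define U' where "U' = (\<lambda>x. indicator \<Omega> x *\<^sub>R U x)"
      define V' where "V' = (\<lambda>x. indicator \<Omega> x *\<^sub>R V x)"
      define G' where "G' = (\<lambda>x. indicator \<Omega> x *\<^sub>R G x)"
      define H' where "H' = (\<lambda>x. indicator \<Omega> x *\<^sub>R H x)"
      have tU: "U' \<in> borel_measurable lebesgue" "integrable lebesgue (\<lambda>x. norm (U' x) powr 2)"
        using Lr_transfer[OF LU] by (simp_all add: U'_def)
      have tV: "V' \<in> borel_measurable lebesgue" "integrable lebesgue (\<lambda>x. norm (V' x) powr 2)"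
        using Lr_transfer[OF LV] by (simp_all add: V'_def)
      have tG: "G' \<in> borel_measurable lebesgue" "integrable lebesgue (\<lambda>x. norm (G' x) powr p)"
        using Lr_transfer[OF LG] by (simp_all add: G'_def)
      have tH: "H' \<in> borel_measurable lebesgue" "integrable lebesgue (\<lambda>x. norm (H' x) powr p)"
        using Lr_transfer[OF LH] by (simp_all add: H'_def)
      have eqd: "Xp_add u (Xp_scale (-1) v) = ((\<lambda>x. U x + (-1) *\<^sub>R V x), (\<lambda>x. G x + (-1) *\<^sub>R H x))"
        using u v by (simp add: Xp_add_def Xp_scale_def)
      have eqm: "Xp_scale (1/2) (Xp_add u v) = ((\<lambda>x. (1/2) *\<^sub>R (U x + V x)), (\<lambda>x. (1/2) *\<^sub>R (G x + H x)))"
        using u v by (simp add: Xp_add_def Xp_scale_def)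
      have id1: "(\<lambda>x. indicator \<Omega> x *\<^sub>R (U x + (-1) *\<^sub>R V x)) = (\<lambda>x. U' x - V' x)"
        unfolding U'_def V'_def by (auto simp: algebra_simps)
      have id2: "(\<lambda>x. indicator \<Omega> x *\<^sub>R (G x + (-1) *\<^sub>R H x)) = (\<lambda>x. G' x - H' x)"
        unfolding G'_def H'_def by (auto simp: algebra_simps)
      have id3: "(\<lambda>x. indicator \<Omega> x *\<^sub>R ((1/2) *\<^sub>R (U x + V x))) = (\<lambda>x. (1/2) *\<^sub>R (U' x + V' x))"
        unfolding U'_def V'_def by (auto simp: algebra_simps)
      have id4: "(\<lambda>x. indicator \<Omega> x *\<^sub>R ((1/2) *\<^sub>R (G x + H x))) = (\<lambda>x. (1/2) *\<^sub>R (G' x + H' x))"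
        unfolding G'_def H'_def by (auto simp: algebra_simps)
      define au where "au = Ipow lebesgue 2 U' powr (q/2)"
      define av where "av = Ipow lebesgue 2 V' powr (q/2)"
      define ad where "ad = Ipow lebesgue 2 (\<lambda>x. U' x - V' x) powr (q/2)"
      define am where "am = Ipow lebesgue 2 (\<lambda>x. (1/2) *\<^sub>R (U' x + V' x)) powr (q/2)"
      define bu where "bu = Ipow lebesgue p G' powr (q/p)"
      define bv where "bv = Ipow lebesgue p H' powr (q/p)"
      define bd where "bd = Ipow lebesgue p (\<lambda>x. G' x - H' x) powr (q/p)"
      define bm where "bm = Ipow lebesgue p (\<lambda>x. (1/2) *\<^sub>R (G' x + H' x)) powr (q/p)"
      have Nu: "Xp_norm \<Omega> p u = (au + bu) powr (1/q)"
        unfolding u fmla au_def bu_def U'_def G'_def ..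
      have Nv: "Xp_norm \<Omega> p v = (av + bv) powr (1/q)"
        unfolding v fmla av_def bv_def V'_def H'_def ..
      have Nd: "Xp_norm \<Omega> p (Xp_add u (Xp_scale (-1) v)) = (ad + bd) powr (1/q)"
        unfolding eqd fmla id1 id2 ad_def bd_def ..
      have Nm: "Xp_norm \<Omega> p (Xp_scale (1/2) (Xp_add u v)) = (am + bm) powr (1/q)"
        unfolding eqm fmla id3 id4 am_def bm_def ..
      have nn: "au \<ge> 0" "av \<ge> 0" "ad \<ge> 0" "am \<ge> 0" "bu \<ge> 0" "bv \<ge> 0" "bd \<ge> 0" "bm \<ge> 0"
        by (simp_all add: au_def av_def ad_def am_def bu_def bv_def bd_def bm_def)
      have su: "au + bu \<le> 1" using rt_le1[of "au + bu" q] nn q0 nu Nu by simp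
      have sv: "av + bv \<le> 1" using rt_le1[of "av + bv" q] nn q0 nv Nv by simp
      have sd: "\<epsilon> powr q \<le> ad + bd" using rt_ge[of "ad + bd" q \<epsilon>] nn q0 eps nd Nd by simp
      have r1: "(1::real) \<le> 2" "1 \<le> p" using p1 by auto
      have amA: "am \<le> (au + av) / 2" unfolding am_def au_def av_def
        by (rule fac_always[OF r1(1) tA tU(1) tV(1) tU(2) tV(2)])
      have bmB: "bm \<le> (bu + bv) / 2" unfolding bm_def bu_def bv_def
        by (rule fac_always[OF r1(2) tB tG(1) tH(1) tG(2) tH(2)])
      have "am + bm \<le> 1 - \<kappa>"
      proof (cases "e \<le> ad")
        case True
        have "am \<le> (au + av) / 2 - \<kappa>A" unfolding am_def au_def av_def
          by (rule hA[OF tU(1) tV(1) tU(2) tV(2)]) (use True nn su sv in \<open>auto simp: au_def av_def ad_def\<close>)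
        then have s1: "am + bm \<le> (au + av) / 2 - \<kappa>A + (bu + bv) / 2" using bmB by linarith
        have s2: "(au + av) / 2 + (bu + bv) / 2 \<le> 1" using su sv by (simp add: field_simps)
        from s1 s2 k(2) show ?thesis by linarith
      next
        case False
        then have "e \<le> bd" using sd by (simp add: e_def)
        have "bm \<le> (bu + bv) / 2 - \<kappa>B" unfolding bm_def bu_def bv_def
          by (rule hB[OF tG(1) tH(1) tG(2) tH(2)]) (use \<open>e \<le> bd\<close> nn su sv in \<open>auto simp: bu_def bv_def bd_def\<close>)
        then have s1: "am + bm \<le> (au + av) / 2 + (bu + bv) / 2 - \<kappa>B" using amA by linarith
        have s2: "(au + av) / 2 + (bu + bv) / 2 \<le> 1" using su sv by (simp add: field_simps)
        from s1 s2 k(3) show ?thesis by linarith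
      qed
      then have "(am + bm) powr (1/q) \<le> (1 - \<kappa>) powr (1/q)"
        using nn q0 by (intro powr_mono2) auto
      then show "Xp_norm \<Omega> p (Xp_scale (1/2) (Xp_add u v)) \<le> 1 - \<delta>"
        unfolding Nm \<delta>_def by simp
    qed
  qed
qed

end
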